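(* Let $\Omega\subset\mathbb{C}$ be a simply connected domain, let $(g,\mathcal{P},\mathcal{Q})$ be a Weierstrass data of the first kind on $\Omega$, and let $\lambda\in\mathbb{R}$ be such that $1+i\lambda g(z)\neq0$ for all $z\in\Omega$. Set $g_\lambda:=\frac{g}{1+i\lambda g}$ and $\mathcal{P}_\lambda:=\mathcal{P}$. Then there exists a $\mathcal{C}^2$ function $\mathcal{Q}_\lambda:\Omega\to\mathbb{R}$ satisfying $$(\mathcal{Q}_\lambda)_z=\left(\frac1g+i\lambda\right)\left(g\,\mathcal{Q}_z-i\lambda\,\mathcal{P}_z\right),$$ and for any such $\mathcal{Q}_\lambda$ the triple $(g_\lambda,\mathcal{P}_\lambda,\mathcal{Q}_\lambda)$ is a Weierstrass data of the first kind on $\Omega$.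
   Context: $\Omega\subset\mathbb{R}^2\equiv\mathbb{C}$ has complex coordinate $z=u+iv$, and $\partial_z=\frac12(\partial_u-i\partial_v)$, $\partial_{\overline z}=\frac12(\partial_u+i\partial_v)$; subscripts denote partial derivatives. A Weierstrass data of the first kind on $\Omega$ is a triple $(g,\mathcal{P},\mathcal{Q})$ where $g:\Omega\to\mathbb{C}\setminus\{0\}$ and $\mathcal{P},\mathcal{Q}:\Omega\to\mathbb{R}$ are $\mathcal{C}^2$, satisfying $g_{\overline z}=0$, $\mathcal{P}_{z\overline z}=|g|^2\mathcal{Q}_{z\overline z}$, and $\mathcal{P}_z-|g|^2\mathcal{Q}_z\neq0$ at every point of $\Omega$. *)

theory Defs
  imports "HOL-Analysis.Analysis"
begin

text \<open>We identify \<open>\<real>\<^sup>2\<close> with \<open>\<complex>\<close>, \<open>z = u + i v\<close>. Partial derivatives in the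
  real directions \<open>u\<close> and \<open>v\<close>.\<close>

definition partial_u :: "(complex \<Rightarrow> 'a::real_normed_vector) \<Rightarrow> complex \<Rightarrow> 'a" where
  "partial_u f z = vector_derivative (\<lambda>t::real. f (z + of_real t)) (at 0)"

definition partial_v :: "(complex \<Rightarrow> 'a::real_normed_vector) \<Rightarrow> complex \<Rightarrow> 'a" where
  "partial_v f z = vector_derivative (\<lambda>t::real. f (z + \<i> * of_real t)) (at 0)"

definition C1_on :: "complex set \<Rightarrow> (complex \<Rightarrow> 'a::real_normed_vector) \<Rightarrow> bool" where
  "C1_on \<Omega> f \<longleftrightarrow>
     (\<forall>z\<in>\<Omega>. (\<lambda>t::real. f (z + of_real t)) differentiable (at 0)
            \<and> (\<lambda>t::real. f (z + \<i> * of_real t)) differentiable (at 0))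
     \<and> continuous_on \<Omega> (partial_u f) \<and> continuous_on \<Omega> (partial_v f)"

definition C2_on :: "complex set \<Rightarrow> (complex \<Rightarrow> 'a::real_normed_vector) \<Rightarrow> bool" where
  "C2_on \<Omega> f \<longleftrightarrow> C1_on \<Omega> f \<and> C1_on \<Omega> (partial_u f) \<and> C1_on \<Omega> (partial_v f)"

definition dz :: "(complex \<Rightarrow> complex) \<Rightarrow> complex \<Rightarrow> complex" where
  "dz f z = (partial_u f z - \<i> * partial_v f z) / 2"

definition dzbar :: "(complex \<Rightarrow> complex) \<Rightarrow> complex \<Rightarrow> complex" where
  "dzbar f z = (partial_u f z + \<i> * partial_v f z) / 2"

definition weierstrass_first_kind ::
  "complex set \<Rightarrow> (complex \<Rightarrow> complex) \<Rightarrow> (complex \<Rightarrow> real) \<Rightarrow> (complex \<Rightarrow> real) \<Rightarrow> bool" where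
  "weierstrass_first_kind \<Omega> g P Q \<longleftrightarrow>
     C2_on \<Omega> g \<and> C2_on \<Omega> P \<and> C2_on \<Omega> Q \<and>
     (\<forall>z\<in>\<Omega>.
        g z \<noteq> 0 \<and>
        dzbar g z = 0 \<and>
        dz (dzbar (\<lambda>w. complex_of_real (P w))) z
          = complex_of_real ((cmod (g z))\<^sup>2) * dz (dzbar (\<lambda>w. complex_of_real (Q w))) z \<and>
        dz (\<lambda>w. complex_of_real (P w)) z
          - complex_of_real ((cmod (g z))\<^sup>2) * dz (\<lambda>w. complex_of_real (Q w)) z \<noteq> 0)"

end

theory Submission imports Defs "HOL-Complex_Analysis.Complex_Analysis" begin

definition genD :: "complex set \<Rightarrow> (complex \<Rightarrow> 'a::real_normed_vector) \<Rightarrow> (complex \<Rightarrow> 'a) \<Rightarrow> (complex \<Rightarrow> 'a) \<Rightarrow> bool" where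
  "genD S f fu fv \<longleftrightarrow> (\<forall>z\<in>S. (f has_derivative (\<lambda>h. Re h *\<^sub>R fu z + Im h *\<^sub>R fv z)) (at z))
      \<and> continuous_on S fu \<and> continuous_on S fv"

lemma G1:
  fixes f :: "complex \<Rightarrow> 'a::real_normed_vector"
  assumes "(f has_derivative D) (at z)"
  shows "((\<lambda>t. f (z + of_real t)) has_vector_derivative D 1) (at 0)"
    and "((\<lambda>t. f (z + \<i> * of_real t)) has_vector_derivative D \<i>) (at 0)"
proof -
  have lin: "linear D" using assms has_derivative_linear by blast
  have a: "(f has_derivative D) (at (z + of_real 0))" using assms by simp
  have "((\<lambda>t::real. z + of_real t) has_derivative (\<lambda>t. of_real t)) (at 0)"
    by (auto intro!: derivative_eq_intros)
  from has_derivative_compose[OF this a]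
  have "((\<lambda>t. f (z + of_real t)) has_derivative (\<lambda>t. D (of_real t))) (at 0)" .
  moreover have "D (of_real t) = t *\<^sub>R D 1" for t
    using linear_cmul[OF lin, of t 1] by (simp add: scaleR_conv_of_real)
  ultimately show "((\<lambda>t. f (z + of_real t)) has_vector_derivative D 1) (at 0)"
    by (simp add: has_vector_derivative_def)
  have a: "(f has_derivative D) (at (z + \<i> * of_real 0))" using assms by simp
  have "((\<lambda>t::real. z + \<i> * of_real t) has_derivative (\<lambda>t. \<i> * of_real t)) (at 0)"
    by (auto intro!: derivative_eq_intros)
  from has_derivative_compose[OF this a]
  have "((\<lambda>t. f (z + \<i> * of_real t)) has_derivative (\<lambda>t. D (\<i> * of_real t))) (at 0)" .
  moreover have "D (\<i> * of_real t) = t *\<^sub>R D \<i>" for t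
    using linear_cmul[OF lin, of t \<i>] by (simp add: scaleR_conv_of_real mult.commute)
  ultimately show "((\<lambda>t. f (z + \<i> * of_real t)) has_vector_derivative D \<i>) (at 0)"
    by (simp add: has_vector_derivative_def)
qed

lemma genD_partial:
  fixes f :: "complex \<Rightarrow> 'a::real_normed_vector"
  assumes "genD S f fu fv" "z \<in> S"
  shows "((\<lambda>t. f (z + of_real t)) has_vector_derivative fu z) (at 0)"
    and "((\<lambda>t. f (z + \<i> * of_real t)) has_vector_derivative fv z) (at 0)"
    and "partial_u f z = fu z" and "partial_v f z = fv z"
proof -
  have d: "(f has_derivative (\<lambda>h. Re h *\<^sub>R fu z + Im h *\<^sub>R fv z)) (at z)"
    using assms unfolding genD_def by blast
  show 1: "((\<lambda>t. f (z + of_real t)) has_vector_derivative fu z) (at 0)"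
    using G1(1)[OF d] by simp
  show 2: "((\<lambda>t. f (z + \<i> * of_real t)) has_vector_derivative fv z) (at 0)"
    using G1(2)[OF d] by simp
  show "partial_u f z = fu z" unfolding partial_u_def using vector_derivative_at[OF 1] .
  show "partial_v f z = fv z" unfolding partial_v_def using vector_derivative_at[OF 2] .
qed

lemma genD_C1:
  fixes f :: "complex \<Rightarrow> 'a::real_normed_vector"
  assumes "genD S f fu fv"
  shows "C1_on S f"
proof -
  have c: "continuous_on S fu" "continuous_on S fv" using assms unfolding genD_def by auto
  have "continuous_on S (partial_u f)"
    using c(1) by (rule continuous_on_cong[THEN iffD1, rotated 2]) (auto simp: genD_partial(3)[OF assms])
  moreover have "continuous_on S (partial_v f)"
    using c(2) by (rule continuous_on_cong[THEN iffD1, rotated 2]) (auto simp: genD_partial(4)[OF assms])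
  moreover have "(\<lambda>t::real. f (z + of_real t)) differentiable (at 0)" if "z \<in> S" for z
    using genD_partial(1)[OF assms that] unfolding has_vector_derivative_def differentiable_def by blast
  moreover have "(\<lambda>t::real. f (z + \<i> * of_real t)) differentiable (at 0)" if "z \<in> S" for z
    using genD_partial(2)[OF assms that] unfolding has_vector_derivative_def differentiable_def by blast
  ultimately show ?thesis unfolding C1_on_def by blast
qed

lemma genD_cong:
  fixes f :: "complex \<Rightarrow> 'a::real_normed_vector"
  assumes "genD S f fu fv" "open S" "\<And>z. z \<in> S \<Longrightarrow> f' z = f z"
    "\<And>z. z \<in> S \<Longrightarrow> fu' z = fu z" "\<And>z. z \<in> S \<Longrightarrow> fv' z = fv z"
  shows "genD S f' fu' fv'"
  unfolding genD_def
proof (intro conjI ballI)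
  fix z assume z: "z \<in> S"
  have "(f has_derivative (\<lambda>h. Re h *\<^sub>R fu z + Im h *\<^sub>R fv z)) (at z)"
    using assms z unfolding genD_def by blast
  then have "(f' has_derivative (\<lambda>h. Re h *\<^sub>R fu z + Im h *\<^sub>R fv z)) (at z)"
    by (rule has_derivative_transform_within_open[OF _ assms(2) z]) (simp add: assms(3))
  then show "(f' has_derivative (\<lambda>h. Re h *\<^sub>R fu' z + Im h *\<^sub>R fv' z)) (at z)"
    using assms(4,5) z by simp
next
  show "continuous_on S fu'" using assms(1,4) continuous_on_cong unfolding genD_def by metis
  show "continuous_on S fv'" using assms(1,5) continuous_on_cong unfolding genD_def by metis
qed

lemma genD_linear:
  fixes f :: "complex \<Rightarrow> 'a::real_normed_vector" and L :: "'a \<Rightarrow> 'b::real_normed_vector"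
  assumes "genD S f fu fv" "bounded_linear L"
  shows "genD S (\<lambda>z. L (f z)) (\<lambda>z. L (fu z)) (\<lambda>z. L (fv z))"
  unfolding genD_def
proof (intro conjI ballI)
  interpret L: bounded_linear L by (rule assms(2))
  fix z assume z: "z \<in> S"
  have "(f has_derivative (\<lambda>h. Re h *\<^sub>R fu z + Im h *\<^sub>R fv z)) (at z)"
    using assms z unfolding genD_def by blast
  from L.has_derivative[OF this]
  show "((\<lambda>z. L (f z)) has_derivative (\<lambda>h. Re h *\<^sub>R L (fu z) + Im h *\<^sub>R L (fv z))) (at z)"
    by (simp add: L.add L.scaleR)
next
  show "continuous_on S (\<lambda>z. L (fu z))" "continuous_on S (\<lambda>z. L (fv z))"
    using assms unfolding genD_def
    by (auto intro: continuous_on_compose2[OF linear_continuous_on[OF assms(2)]])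
qed

lemma C1_genD:
  fixes f :: "complex \<Rightarrow> 'a::real_normed_vector"
  assumes S: "open S" and C: "C1_on S f"
  shows "genD S f (partial_u f) (partial_v f)"
  unfolding genD_def
proof (intro conjI ballI)
  show cu: "continuous_on S (partial_u f)" and cv: "continuous_on S (partial_v f)"
    using C unfolding C1_on_def by auto
  have du: "((\<lambda>t. f (w + of_real t)) has_vector_derivative partial_u f w) (at 0)" if "w \<in> S" for w
    using C that unfolding C1_on_def partial_u_def by (auto simp: vector_derivative_works)
  have dv: "((\<lambda>t. f (w + \<i> * of_real t)) has_vector_derivative partial_v f w) (at 0)" if "w \<in> S" for w
    using C that unfolding C1_on_def partial_v_def by (auto simp: vector_derivative_works)
  fix z assume z: "z \<in> S"
  obtain r where r: "r > 0" "ball z r \<subseteq> S" using S z open_contains_ball by blast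
  define X where "X = ball (0::real) (r/2)"
  define F where "F x y = f (z + of_real x + \<i> * of_real y)" for x y :: real
  have X0: "0 \<in> X" using r by (simp add: X_def)
  have inS: "z + of_real x + \<i> * of_real y \<in> S" if "x \<in> X" "y \<in> X" for x y
  proof -
    have "cmod (of_real x + \<i> * of_real y) \<le> cmod (of_real x) + cmod (\<i> * of_real y)"
      by (rule norm_triangle_ineq)
    also have "\<dots> < r" using that by (simp add: X_def norm_mult)
    finally have lt: "cmod (of_real x + \<i> * of_real y) < r" .
    have e: "cmod (- complex_of_real x - \<i> * complex_of_real y) = cmod (complex_of_real x + \<i> * complex_of_real y)"
      by (subst norm_minus_cancel[symmetric]) simp
    have "z + (of_real x + \<i> * of_real y) \<in> ball z r" using lt by (simp add: dist_norm e)
    then show ?thesis using r(2) by (auto simp: add.assoc)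
  qed
  have fx: "((\<lambda>x. F x 0) has_derivative (\<lambda>t. t *\<^sub>R partial_u f z)) (at 0 within X)"
    using du[OF z] unfolding F_def has_vector_derivative_def
    by (auto intro: has_derivative_at_withinI)
  have fy: "((\<lambda>y. F x y) has_derivative blinfun_apply (blinfun_scaleR_left (partial_v f (z + of_real x + \<i> * of_real y)))) (at y within X)"
    if xy: "x \<in> X" "y \<in> X" for x y
  proof -
    define w where "w = z + of_real x + \<i> * of_real y"
    have w: "w \<in> S" using inS[OF xy] by (simp add: w_def)
    have 1: "((\<lambda>y'. y' - y) has_vector_derivative 1) (at y)"
      by (auto intro!: derivative_eq_intros)
    have 2: "((\<lambda>t. f (w + \<i> * of_real t)) has_vector_derivative partial_v f w) (at ((\<lambda>y'. y' - y) y))"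
      using dv[OF w] by simp
    from vector_diff_chain_at[OF 1 2]
    have "((\<lambda>y'. f (w + \<i> * of_real (y' - y))) has_vector_derivative partial_v f w) (at y)"
      by (simp add: o_def)
    moreover have "(\<lambda>y'. f (w + \<i> * of_real (y' - y))) = (\<lambda>y'. F x y')"
      by (rule ext) (simp add: F_def w_def algebra_simps)
    ultimately show ?thesis unfolding has_vector_derivative_def
      by (auto simp: blinfun_scaleR_left.rep_eq w_def intro: has_derivative_at_withinI)
  qed
  have cont: "continuous (at (0, 0) within X \<times> X)
     (\<lambda>(x, y). blinfun_scaleR_left (partial_v f (z + of_real x + \<i> * of_real y)))"
  proof -
    have c1: "continuous (at (0::real, 0::real)) (\<lambda>p. z + of_real (fst p) + \<i> * of_real (snd p))"
      by (intro continuous_intros)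
    have c2: "continuous (at (z + of_real (fst (0::real, 0::real)) + \<i> * of_real (snd (0::real,0::real)))) (partial_v f)"
      using cv S z by (simp add: continuous_on_eq_continuous_at)
    have "continuous (at (0::real, 0::real)) (\<lambda>p. partial_v f (z + of_real (fst p) + \<i> * of_real (snd p)))"
      using continuous_at_compose[OF c1 c2] by (simp add: o_def)
    then have "continuous (at (0::real, 0::real)) (\<lambda>p. blinfun_scaleR_left (partial_v f (z + of_real (fst p) + \<i> * of_real (snd p))))"
      by (intro continuous_at_compose[unfolded o_def, OF _ linear_continuous_at[OF bounded_linear_blinfun_scaleR_left]])
    moreover have "(\<lambda>(x, y). blinfun_scaleR_left (partial_v f (z + of_real x + \<i> * of_real y))) =
      (\<lambda>p. blinfun_scaleR_left (partial_v f (z + of_real (fst p) + \<i> * of_real (snd p))))"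
      by (auto simp: fun_eq_iff)
    ultimately show ?thesis by (simp add: continuous_at_imp_continuous_within)
  qed
  have "((\<lambda>(x, y). F x y) has_derivative (\<lambda>(tx, ty). tx *\<^sub>R partial_u f z +
      blinfun_apply (blinfun_scaleR_left (partial_v f (z + of_real 0 + \<i> * of_real 0))) ty)) (at (0, 0) within X \<times> X)"
    by (rule has_derivative_partialsI[OF fx fy cont X0]) (auto simp: X_def)
  moreover have "open (X \<times> X)" by (simp add: X_def open_Times)
  moreover have "(0::real, 0::real) \<in> X \<times> X" using X0 by simp
  ultimately have D0: "((\<lambda>(x, y). F x y) has_derivative (\<lambda>(tx, ty). tx *\<^sub>R partial_u f z +
      blinfun_apply (blinfun_scaleR_left (partial_v f (z + of_real 0 + \<i> * of_real 0))) ty)) (at (0, 0))"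
    by (simp only: at_within_open)
  have e1: "(\<lambda>(tx, ty). tx *\<^sub>R partial_u f z +
      blinfun_apply (blinfun_scaleR_left (partial_v f (z + of_real 0 + \<i> * of_real 0))) ty) =
      (\<lambda>(tx, ty). tx *\<^sub>R partial_u f z + ty *\<^sub>R partial_v f z)"
    by (simp add: blinfun_scaleR_left.rep_eq)
  have e2: "(Re (z - z), Im (z - z)) = (0::real, 0::real)" by simp
  have D: "((\<lambda>(x, y). F x y) has_derivative (\<lambda>(tx, ty). tx *\<^sub>R partial_u f z + ty *\<^sub>R partial_v f z)) (at (Re (z - z), Im (z - z)))"
    using D0 unfolding e1 e2 .
  have P: "((\<lambda>h. (Re (h - z), Im (h - z))) has_derivative (\<lambda>h. (Re h, Im h))) (at z)"
    by (auto intro!: derivative_eq_intros)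
  from has_derivative_compose[OF P D]
  have "((\<lambda>h. F (Re (h - z)) (Im (h - z))) has_derivative (\<lambda>h. Re h *\<^sub>R partial_u f z + Im h *\<^sub>R partial_v f z)) (at z)"
    by simp
  moreover have "(\<lambda>h. F (Re (h - z)) (Im (h - z))) = f"
  proof
    fix h
    have "z + (of_real (Re h) - of_real (Re z)) + \<i> * (of_real (Im h) - of_real (Im z)) = h"
      by (simp add: complex_eq_iff)
    then show "F (Re (h - z)) (Im (h - z)) = f h" by (simp add: F_def)
  qed
  ultimately show "(f has_derivative (\<lambda>h. Re h *\<^sub>R partial_u f z + Im h *\<^sub>R partial_v f z)) (at z)"
    by simp
qed

lemma genD_HU:
  fixes f :: "complex \<Rightarrow> 'a::real_normed_vector"
  assumes "genD S f fu fv" "z + of_real s + \<i> * of_real y \<in> S"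
  shows "((\<lambda>s. f (z + of_real s + \<i> * of_real y)) has_vector_derivative fu (z + of_real s + \<i> * of_real y)) (at s)"
proof -
  let ?w = "z + of_real s + \<i> * of_real y"
  have d: "(f has_derivative (\<lambda>h. Re h *\<^sub>R fu ?w + Im h *\<^sub>R fv ?w)) (at ?w)"
    using assms unfolding genD_def by blast
  have "((\<lambda>s::real. z + of_real s + \<i> * of_real y) has_derivative (\<lambda>t. of_real t)) (at s)"
    by (auto intro!: derivative_eq_intros)
  from has_derivative_compose[OF this d]
  show ?thesis unfolding has_vector_derivative_def by simp
qed

lemma genD_HV:
  fixes f :: "complex \<Rightarrow> 'a::real_normed_vector"
  assumes "genD S f fu fv" "z + of_real s + \<i> * of_real y \<in> S"
  shows "((\<lambda>y. f (z + of_real s + \<i> * of_real y)) has_vector_derivative fv (z + of_real s + \<i> * of_real y)) (at y)"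
proof -
  let ?w = "z + of_real s + \<i> * of_real y"
  have d: "(f has_derivative (\<lambda>h. Re h *\<^sub>R fu ?w + Im h *\<^sub>R fv ?w)) (at ?w)"
    using assms unfolding genD_def by blast
  have "((\<lambda>y::real. z + of_real s + \<i> * of_real y) has_derivative (\<lambda>t. \<i> * of_real t)) (at y)"
    by (auto intro!: derivative_eq_intros)
  from has_derivative_compose[OF this d]
  show ?thesis unfolding has_vector_derivative_def by simp
qed

lemma schwarz:
  fixes P :: "complex \<Rightarrow> real"
  assumes S: "open S" and d0: "genD S P Pu Pv" and d1: "genD S Pu Puu Puv"
    and d2: "genD S Pv Pvu Pvv" and z: "z \<in> S"
  shows "Puv z = Pvu z"
proof (rule ccontr)
  assume ne: "Puv z \<noteq> Pvu z"
  define e where "e = \<bar>Puv z - Pvu z\<bar> / 2"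
  have e: "e > 0" using ne by (simp add: e_def)
  obtain r where r: "r > 0" "ball z r \<subseteq> S" using S z open_contains_ball by blast
  have c1: "continuous_on S Puv" using d1 unfolding genD_def by blast
  have c2: "continuous_on S Pvu" using d2 unfolding genD_def by blast
  obtain d1' where d1': "d1' > 0" "\<And>w. w \<in> S \<Longrightarrow> dist w z < d1' \<Longrightarrow> dist (Puv w) (Puv z) < e"
    using c1 z e unfolding continuous_on_iff by metis
  obtain d2' where d2': "d2' > 0" "\<And>w. w \<in> S \<Longrightarrow> dist w z < d2' \<Longrightarrow> dist (Pvu w) (Pvu z) < e"
    using c2 z e unfolding continuous_on_iff by metis
  define t where "t = min r (min d1' d2') / 4"
  have t: "t > 0" using r d1' d2' by (simp add: t_def)
  have near: "z + of_real a + \<i> * of_real b \<in> S \<and> dist (z + of_real a + \<i> * of_real b) z < d1'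
      \<and> dist (z + of_real a + \<i> * of_real b) z < d2'"
    if "0 \<le> a" "a \<le> t" "0 \<le> b" "b \<le> t" for a b
  proof -
    have "cmod (of_real a + \<i> * of_real b) \<le> cmod (of_real a) + cmod (\<i> * of_real b)"
      by (rule norm_triangle_ineq)
    also have "\<dots> \<le> 2 * t" using that by (simp add: norm_mult)
    finally have n: "cmod (of_real a + \<i> * of_real b) \<le> 2 * t" .
    have dd: "dist (z + of_real a + \<i> * of_real b) z = cmod (of_real a + \<i> * of_real b)"
      by (simp add: dist_norm)
    have "2 * t < r" "2 * t < d1'" "2 * t < d2'" using r d1' d2' by (auto simp: t_def)
    then have "dist (z + of_real a + \<i> * of_real b) z < r" "dist (z + of_real a + \<i> * of_real b) z < d1'"
       "dist (z + of_real a + \<i> * of_real b) z < d2'" using n dd by auto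
    then show ?thesis using r(2) by (auto simp: dist_commute)
  qed
  define Delta where "Delta = P (z + of_real t + \<i> * of_real t) - P (z + of_real t + \<i> * of_real 0)
       - P (z + of_real 0 + \<i> * of_real t) + P (z + of_real 0 + \<i> * of_real 0)"
  obtain xi where xi: "0 < xi" "xi < t" "Delta = t * (Pu (z + of_real xi + \<i> * of_real t) - Pu (z + of_real xi + \<i> * of_real 0))"
  proof -
    have "\<exists>x>0. x < t \<and> (\<lambda>s. P (z + of_real s + \<i> * of_real t) - P (z + of_real s + \<i> * of_real 0)) t
          - (\<lambda>s. P (z + of_real s + \<i> * of_real t) - P (z + of_real s + \<i> * of_real 0)) 0
          = (t - 0) * (Pu (z + of_real x + \<i> * of_real t) - Pu (z + of_real x + \<i> * of_real 0))"
    proof (rule MVT2[OF t])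
      fix x assume x: "0 \<le> x" "x \<le> t"
      show "((\<lambda>s. P (z + of_real s + \<i> * of_real t) - P (z + of_real s + \<i> * of_real 0)) has_real_derivative
          Pu (z + of_real x + \<i> * of_real t) - Pu (z + of_real x + \<i> * of_real 0)) (at x)"
        unfolding has_real_derivative_iff_has_vector_derivative
        by (intro has_vector_derivative_diff genD_HU[OF d0]) (use near[of x 0] near[of x t] x t in auto)
    qed
    then show ?thesis using that by (auto simp: Delta_def)
  qed
  obtain eta where eta: "0 < eta" "eta < t" "Pu (z + of_real xi + \<i> * of_real t) - Pu (z + of_real xi + \<i> * of_real 0)
      = t * Puv (z + of_real xi + \<i> * of_real eta)"
  proof -
    have "\<exists>x>0. x < t \<and> (\<lambda>y. Pu (z + of_real xi + \<i> * of_real y)) t - (\<lambda>y. Pu (z + of_real xi + \<i> * of_real y)) 0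
          = (t - 0) * Puv (z + of_real xi + \<i> * of_real x)"
    proof (rule MVT2[OF t])
      fix x assume x: "0 \<le> x" "x \<le> t"
      show "((\<lambda>y. Pu (z + of_real xi + \<i> * of_real y)) has_real_derivative Puv (z + of_real xi + \<i> * of_real x)) (at x)"
        unfolding has_real_derivative_iff_has_vector_derivative
        by (intro genD_HV[OF d1]) (use near[of xi x] x xi in auto)
    qed
    then show ?thesis using that by auto
  qed
  obtain eta' where eta': "0 < eta'" "eta' < t" "Delta = t * (Pv (z + of_real t + \<i> * of_real eta') - Pv (z + of_real 0 + \<i> * of_real eta'))"
  proof -
    have "\<exists>x>0. x < t \<and> (\<lambda>y. P (z + of_real t + \<i> * of_real y) - P (z + of_real 0 + \<i> * of_real y)) t
          - (\<lambda>y. P (z + of_real t + \<i> * of_real y) - P (z + of_real 0 + \<i> * of_real y)) 0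
          = (t - 0) * (Pv (z + of_real t + \<i> * of_real x) - Pv (z + of_real 0 + \<i> * of_real x))"
    proof (rule MVT2[OF t])
      fix x assume x: "0 \<le> x" "x \<le> t"
      show "((\<lambda>y. P (z + of_real t + \<i> * of_real y) - P (z + of_real 0 + \<i> * of_real y)) has_real_derivative
          Pv (z + of_real t + \<i> * of_real x) - Pv (z + of_real 0 + \<i> * of_real x)) (at x)"
        unfolding has_real_derivative_iff_has_vector_derivative
        by (intro has_vector_derivative_diff genD_HV[OF d0]) (use near[of 0 x] near[of t x] x t in auto)
    qed
    then show ?thesis using that by (auto simp: Delta_def algebra_simps)
  qed
  obtain xi' where xi': "0 < xi'" "xi' < t" "Pv (z + of_real t + \<i> * of_real eta') - Pv (z + of_real 0 + \<i> * of_real eta')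
      = t * Pvu (z + of_real xi' + \<i> * of_real eta')"
  proof -
    have "\<exists>x>0. x < t \<and> (\<lambda>s. Pv (z + of_real s + \<i> * of_real eta')) t - (\<lambda>s. Pv (z + of_real s + \<i> * of_real eta')) 0
          = (t - 0) * Pvu (z + of_real x + \<i> * of_real eta')"
    proof (rule MVT2[OF t])
      fix x assume x: "0 \<le> x" "x \<le> t"
      show "((\<lambda>s. Pv (z + of_real s + \<i> * of_real eta')) has_real_derivative Pvu (z + of_real x + \<i> * of_real eta')) (at x)"
        unfolding has_real_derivative_iff_has_vector_derivative
        by (intro genD_HU[OF d2]) (use near[of x eta'] x eta' in auto)
    qed
    then show ?thesis using that by auto
  qed
  have D1: "Delta = t * (t * Puv (z + of_real xi + \<i> * of_real eta))"
    using xi(3) eta(3) by simp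
  have D2: "Delta = t * (t * Pvu (z + of_real xi' + \<i> * of_real eta'))"
    using eta'(3) xi'(3) by simp
  have "t * (t * Puv (z + of_real xi + \<i> * of_real eta)) = t * (t * Pvu (z + of_real xi' + \<i> * of_real eta'))"
    using D1 D2 by (rule trans[OF sym])
  then have eq: "Puv (z + of_real xi + \<i> * of_real eta) = Pvu (z + of_real xi' + \<i> * of_real eta')"
    using t by simp
  have n1: "dist (Puv (z + of_real xi + \<i> * of_real eta)) (Puv z) < e"
    using near[of xi eta] xi eta d1'(2) by auto
  have n2: "dist (Pvu (z + of_real xi' + \<i> * of_real eta')) (Pvu z) < e"
    using near[of xi' eta'] xi' eta' d2'(2) by auto
  from n1 n2 eq have "\<bar>Puv z - Pvu z\<bar> < 2 * e" by (simp add: dist_real_def)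
  then show False by (simp add: e_def)
qed

definition Wd :: "complex set \<Rightarrow> (complex \<Rightarrow> complex) \<Rightarrow> (complex \<Rightarrow> complex) \<Rightarrow> (complex \<Rightarrow> complex) \<Rightarrow> bool" where
  "Wd S f a b \<longleftrightarrow> (\<forall>z\<in>S. (f has_derivative (\<lambda>h. a z * h + b z * cnj h)) (at z))
      \<and> continuous_on S a \<and> continuous_on S b"

lemma lin_ident: "Re h *\<^sub>R u + Im h *\<^sub>R v = (u - \<i> * v) / 2 * h + (u + \<i> * v) / 2 * cnj h"
  by (simp add: complex_eq_iff scaleR_conv_of_real field_simps)

lemma lin_ident2: "a * h + b * cnj h = Re h *\<^sub>R (a + b) + Im h *\<^sub>R (\<i> * (a - b))"
  by (simp add: complex_eq_iff scaleR_conv_of_real algebra_simps)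

lemma genD_Wd:
  assumes "genD S f fu fv"
  shows "Wd S f (\<lambda>z. (fu z - \<i> * fv z) / 2) (\<lambda>z. (fu z + \<i> * fv z) / 2)"
  using assms unfolding genD_def Wd_def lin_ident
  by (auto intro!: continuous_intros)

lemma Wd_genD:
  assumes "Wd S f a b"
  shows "genD S f (\<lambda>z. a z + b z) (\<lambda>z. \<i> * (a z - b z))"
  using assms unfolding genD_def Wd_def lin_ident2
  by (auto intro!: continuous_intros)

lemma Wd_dz:
  assumes "Wd S f a b" "z \<in> S"
  shows "dz f z = a z" "dzbar f z = b z" "partial_u f z = a z + b z" "partial_v f z = \<i> * (a z - b z)"
proof -
  note g = genD_partial[OF Wd_genD[OF assms(1)] assms(2)]
  show "partial_u f z = a z + b z" "partial_v f z = \<i> * (a z - b z)" using g(3,4) .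
  show "dz f z = a z" unfolding dz_def g(3,4) by (simp add: field_simps)
  show "dzbar f z = b z" unfolding dzbar_def g(3,4) by (simp add: field_simps)
qed

lemma Wd_cong:
  assumes "Wd S f a b" "open S" "\<And>z. z \<in> S \<Longrightarrow> f' z = f z"
    "\<And>z. z \<in> S \<Longrightarrow> a' z = a z" "\<And>z. z \<in> S \<Longrightarrow> b' z = b z"
  shows "Wd S f' a' b'"
  unfolding Wd_def
proof (intro conjI ballI)
  fix z assume z: "z \<in> S"
  have "(f has_derivative (\<lambda>h. a z * h + b z * cnj h)) (at z)"
    using assms z unfolding Wd_def by blast
  then have "(f' has_derivative (\<lambda>h. a z * h + b z * cnj h)) (at z)"
    by (rule has_derivative_transform_within_open[OF _ assms(2) z]) (simp add: assms(3))
  then show "(f' has_derivative (\<lambda>h. a' z * h + b' z * cnj h)) (at z)"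
    using assms(4,5) z by simp
next
  show "continuous_on S a'"
    using assms(1) unfolding Wd_def by (auto intro: continuous_on_cong[THEN iffD1, rotated 2] simp: assms(4))
  show "continuous_on S b'"
    using assms(1) unfolding Wd_def by (auto intro: continuous_on_cong[THEN iffD1, rotated 2] simp: assms(5))
qed

lemma Wd_eq:
  assumes "Wd S f a b" "open S" "\<And>z. z \<in> S \<Longrightarrow> a' z = a z" "\<And>z. z \<in> S \<Longrightarrow> b' z = b z"
  shows "Wd S f a' b'"
  using Wd_cong[OF assms(1,2) _ assms(3,4)] by simp

lemma Wd_canon:
  assumes "Wd S f a b" "open S"
  shows "Wd S f (dz f) (dzbar f)"
  using Wd_eq[OF assms] Wd_dz[OF assms(1)] by simp

lemma Wd_cont:
  assumes "Wd S f a b"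
  shows "continuous_on S f"
proof -
  have "isCont f z" if "z \<in> S" for z
    using assms that unfolding Wd_def by (meson has_derivative_continuous)
  then show ?thesis by (simp add: continuous_at_imp_continuous_on)
qed

lemma Wd_C1:
  assumes "Wd S f a b"
  shows "C1_on S f"
  using genD_C1[OF Wd_genD[OF assms]] .

lemma C1_Wd:
  assumes "open S" "C1_on S f"
  shows "Wd S f (dz f) (dzbar f)"
proof -
  have "Wd S f (\<lambda>z. (partial_u f z - \<i> * partial_v f z) / 2) (\<lambda>z. (partial_u f z + \<i> * partial_v f z) / 2)"
    by (rule genD_Wd[OF C1_genD[OF assms]])
  then show ?thesis by (simp add: dz_def[abs_def] dzbar_def[abs_def])
qed

lemma Wd_const: "Wd S (\<lambda>z. c) (\<lambda>z. 0) (\<lambda>z. 0)"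
  unfolding Wd_def by (auto intro!: derivative_eq_intros)

lemma Wd_add:
  assumes "Wd S f a b" "Wd S g c d"
  shows "Wd S (\<lambda>z. f z + g z) (\<lambda>z. a z + c z) (\<lambda>z. b z + d z)"
  using assms unfolding Wd_def
  by (auto intro!: continuous_intros has_derivative_add[THEN has_derivative_eq_rhs] simp: algebra_simps)

lemma Wd_diff:
  assumes "Wd S f a b" "Wd S g c d"
  shows "Wd S (\<lambda>z. f z - g z) (\<lambda>z. a z - c z) (\<lambda>z. b z - d z)"
  using assms unfolding Wd_def
  by (auto intro!: continuous_intros has_derivative_diff[THEN has_derivative_eq_rhs] simp: algebra_simps)

lemma Wd_mult:
  assumes "Wd S f a b" "Wd S g c d"
  shows "Wd S (\<lambda>z. f z * g z) (\<lambda>z. a z * g z + f z * c z) (\<lambda>z. b z * g z + f z * d z)"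
proof -
  have cf: "continuous_on S f" and cg: "continuous_on S g" using Wd_cont assms by auto
  show ?thesis using assms cf cg unfolding Wd_def
    by (auto intro!: continuous_intros has_derivative_mult[THEN has_derivative_eq_rhs] simp: algebra_simps)
qed

lemma Wd_cmult:
  assumes "Wd S f a b"
  shows "Wd S (\<lambda>z. k * f z) (\<lambda>z. k * a z) (\<lambda>z. k * b z)"
  using Wd_mult[OF Wd_const assms, of k] by simp

lemma Wd_inverse:
  assumes "Wd S f a b" "\<And>z. z \<in> S \<Longrightarrow> f z \<noteq> 0"
  shows "Wd S (\<lambda>z. inverse (f z)) (\<lambda>z. - a z / (f z)^2) (\<lambda>z. - b z / (f z)^2)"
proof -
  have cf: "continuous_on S f" using Wd_cont assms by auto
  show ?thesis unfolding Wd_def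
  proof (intro conjI ballI)
    fix z assume z: "z \<in> S"
    have "(f has_derivative (\<lambda>h. a z * h + b z * cnj h)) (at z)" using assms z unfolding Wd_def by blast
    from Deriv.has_derivative_inverse[OF assms(2)[OF z] this]
    show "((\<lambda>z. inverse (f z)) has_derivative (\<lambda>h. - a z / (f z)\<^sup>2 * h + - b z / (f z)\<^sup>2 * cnj h)) (at z)"
      by (rule has_derivative_eq_rhs) (use assms(2)[OF z] in \<open>auto simp: fun_eq_iff field_simps power2_eq_square\<close>)
  next
    show "continuous_on S (\<lambda>z. - a z / (f z)\<^sup>2)" "continuous_on S (\<lambda>z. - b z / (f z)\<^sup>2)"
      using assms cf unfolding Wd_def by (auto intro!: continuous_intros)
  qed
qed

lemma Wd_cnj:
  assumes "Wd S f a b"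
  shows "Wd S (\<lambda>z. cnj (f z)) (\<lambda>z. cnj (b z)) (\<lambda>z. cnj (a z))"
  using assms unfolding Wd_def
  by (auto intro!: continuous_intros has_derivative_cnj[THEN has_derivative_eq_rhs] simp: algebra_simps)

lemma Wd_holo:
  assumes "f holomorphic_on S" "open S"
  shows "Wd S f (deriv f) (\<lambda>z. 0)"
  unfolding Wd_def
proof (intro conjI ballI)
  fix z assume z: "z \<in> S"
  have "(f has_field_derivative deriv f z) (at z)"
    using assms z holomorphic_derivI by blast
  then show "(f has_derivative (\<lambda>h. deriv f z * h + 0 * cnj h)) (at z)"
    by (simp add: has_field_derivative_def)
next
  show "continuous_on S (deriv f)"
    using assms holomorphic_deriv holomorphic_on_imp_continuous_on by blast
qed (simp add: continuous_on_const)

lemma Wd_holoI: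
  assumes "Wd S f a (\<lambda>z. 0)"
  shows "f holomorphic_on S" "\<And>z. z \<in> S \<Longrightarrow> (f has_field_derivative a z) (at z)"
proof -
  show d: "(f has_field_derivative a z) (at z)" if "z \<in> S" for z
  proof -
    have "(f has_derivative (\<lambda>h. a z * h + 0 * cnj h)) (at z)"
      using assms that unfolding Wd_def by blast
    then show ?thesis unfolding has_field_derivative_def by simp
  qed
  show "f holomorphic_on S" unfolding holomorphic_on_def field_differentiable_def
    using d has_field_derivative_at_within by blast
qed

lemma Wd_compose:
  assumes "Wd S F a b" "\<And>w. w \<in> T \<Longrightarrow> (psi has_field_derivative psi' w) (at w)"
    "continuous_on T psi'" "psi ` T \<subseteq> S"
  shows "Wd T (\<lambda>w. F (psi w)) (\<lambda>w. a (psi w) * psi' w) (\<lambda>w. b (psi w) * cnj (psi' w))"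
  unfolding Wd_def
proof (intro conjI ballI)
  fix w assume w: "w \<in> T"
  have "(F has_derivative (\<lambda>h. a (psi w) * h + b (psi w) * cnj h)) (at (psi w))"
    using assms w unfolding Wd_def by blast
  from has_derivative_compose[OF assms(2)[OF w, unfolded has_field_derivative_def] this]
  show "((\<lambda>w. F (psi w)) has_derivative (\<lambda>h. a (psi w) * psi' w * h + b (psi w) * cnj (psi' w) * cnj h)) (at w)"
    by (simp add: algebra_simps)
next
  have cp: "continuous_on T psi"
    using assms(2) by (meson DERIV_isCont continuous_at_imp_continuous_on)
  have ca: "continuous_on S a" and cb: "continuous_on S b" using assms(1) unfolding Wd_def by auto
  show "continuous_on T (\<lambda>w. a (psi w) * psi' w)"
    by (intro continuous_intros continuous_on_compose2[OF ca cp assms(4)] assms(3))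
  show "continuous_on T (\<lambda>w. b (psi w) * cnj (psi' w))"
    by (intro continuous_intros continuous_on_compose2[OF cb cp assms(4)] assms(3))
qed

lemma Wd_C2:
  assumes S: "open S" and w: "Wd S f a b" "Wd S a a1 b1" "Wd S b a2 b2"
  shows "C2_on S f"
proof -
  have "Wd S (\<lambda>z. a z + b z) (\<lambda>z. a1 z + a2 z) (\<lambda>z. b1 z + b2 z)" by (rule Wd_add[OF w(2,3)])
  then have "Wd S (partial_u f) (\<lambda>z. a1 z + a2 z) (\<lambda>z. b1 z + b2 z)"
    by (rule Wd_cong[OF _ S]) (auto simp: Wd_dz[OF w(1)])
  moreover have "Wd S (\<lambda>z. \<i> * (a z - b z)) (\<lambda>z. \<i> * (a1 z - a2 z)) (\<lambda>z. \<i> * (b1 z - b2 z))"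
    by (rule Wd_cmult[OF Wd_diff[OF w(2,3)]])
  then have "Wd S (partial_v f) (\<lambda>z. \<i> * (a1 z - a2 z)) (\<lambda>z. \<i> * (b1 z - b2 z))"
    by (rule Wd_cong[OF _ S]) (auto simp: Wd_dz[OF w(1)])
  ultimately show ?thesis unfolding C2_on_def using Wd_C1 w(1) by blast
qed

lemma holo_C2:
  assumes "open S" "f holomorphic_on S"
  shows "C2_on S f"
proof -
  have "deriv f holomorphic_on S" using assms holomorphic_deriv by blast
  then show ?thesis
    using Wd_C2[OF assms(1) Wd_holo[OF assms(2,1)] Wd_holo[of "deriv f" S] Wd_const] assms(1) by blast
qed

lemma C2_linear:
  fixes f :: "complex \<Rightarrow> 'a::real_normed_vector" and L :: "'a \<Rightarrow> 'b::real_normed_vector"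
  assumes S: "open S" and C: "C2_on S f" and L: "bounded_linear L"
  shows "C2_on S (\<lambda>z. L (f z))"
proof -
  have c: "C1_on S f" "C1_on S (partial_u f)" "C1_on S (partial_v f)" using C unfolding C2_on_def by auto
  have g0: "genD S (\<lambda>z. L (f z)) (\<lambda>z. L (partial_u f z)) (\<lambda>z. L (partial_v f z))"
    by (rule genD_linear[OF C1_genD[OF S c(1)] L])
  have g1: "genD S (\<lambda>z. L (partial_u f z)) (\<lambda>z. L (partial_u (partial_u f) z)) (\<lambda>z. L (partial_v (partial_u f) z))"
    by (rule genD_linear[OF C1_genD[OF S c(2)] L])
  have g2: "genD S (\<lambda>z. L (partial_v f z)) (\<lambda>z. L (partial_u (partial_v f) z)) (\<lambda>z. L (partial_v (partial_v f) z))"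
    by (rule genD_linear[OF C1_genD[OF S c(3)] L])
  have "genD S (partial_u (\<lambda>z. L (f z))) (\<lambda>z. L (partial_u (partial_u f) z)) (\<lambda>z. L (partial_v (partial_u f) z))"
    by (rule genD_cong[OF g1 S]) (auto simp: genD_partial(3)[OF g0])
  moreover have "genD S (partial_v (\<lambda>z. L (f z))) (\<lambda>z. L (partial_u (partial_v f) z)) (\<lambda>z. L (partial_v (partial_v f) z))"
    by (rule genD_cong[OF g2 S]) (auto simp: genD_partial(4)[OF g0])
  ultimately show ?thesis unfolding C2_on_def using genD_C1 g0 by blast
qed

lemma real_C2_from:
  fixes R :: "complex \<Rightarrow> real"
  assumes S: "open S" and w: "Wd S (\<lambda>w. complex_of_real (R w)) a b" "Wd S a a1 b1" "Wd S b a2 b2"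
  shows "C2_on S R"
  using C2_linear[OF S Wd_C2[OF S w] bounded_linear_Re] by simp

lemma real_C2_facts:
  fixes P :: "complex \<Rightarrow> real"
  assumes S: "open S" and C: "C2_on S P"
  obtains p p1 p2 where "Wd S (\<lambda>w. complex_of_real (P w)) p (\<lambda>z. cnj (p z))" "Wd S p p1 p2"
    "\<And>z. z \<in> S \<Longrightarrow> Im (p2 z) = 0"
    "\<And>z. z \<in> S \<Longrightarrow> dz (\<lambda>w. complex_of_real (P w)) z = p z"
    "\<And>z. z \<in> S \<Longrightarrow> dz (dzbar (\<lambda>w. complex_of_real (P w))) z = p2 z"
proof -
  have c: "C1_on S P" "C1_on S (partial_u P)" "C1_on S (partial_v P)" using C unfolding C2_on_def by auto
  define Pu where "Pu = partial_u P"
  define Pv where "Pv = partial_v P"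
  have g0: "genD S P Pu Pv" unfolding Pu_def Pv_def by (rule C1_genD[OF S c(1)])
  have g1: "genD S Pu (partial_u Pu) (partial_v Pu)" unfolding Pu_def by (rule C1_genD[OF S c(2)])
  have g2: "genD S Pv (partial_u Pv) (partial_v Pv)" unfolding Pv_def by (rule C1_genD[OF S c(3)])
  have sw: "partial_v Pu z = partial_u Pv z" if "z \<in> S" for z
    by (rule schwarz[OF S g0 g1 g2 that])
  note lin = bounded_linear_of_real
  define p where "p z = (complex_of_real (Pu z) - \<i> * complex_of_real (Pv z)) / 2" for z
  have w0: "Wd S (\<lambda>w. complex_of_real (P w)) p (\<lambda>z. cnj (p z))"
    by (rule Wd_eq[OF genD_Wd[OF genD_linear[OF g0 lin]] S]) (auto simp: p_def complex_eq_iff)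
  define A1 where "A1 z = (complex_of_real (partial_u Pu z) - \<i> * complex_of_real (partial_v Pu z)) / 2" for z
  define B1 where "B1 z = (complex_of_real (partial_u Pu z) + \<i> * complex_of_real (partial_v Pu z)) / 2" for z
  define A2 where "A2 z = (complex_of_real (partial_u Pv z) - \<i> * complex_of_real (partial_v Pv z)) / 2" for z
  define B2 where "B2 z = (complex_of_real (partial_u Pv z) + \<i> * complex_of_real (partial_v Pv z)) / 2" for z
  have w1: "Wd S (\<lambda>z. complex_of_real (Pu z)) A1 B1"
    using genD_Wd[OF genD_linear[OF g1 lin]] unfolding A1_def[abs_def] B1_def[abs_def] by simp
  have w2: "Wd S (\<lambda>z. complex_of_real (Pv z)) A2 B2"
    using genD_Wd[OF genD_linear[OF g2 lin]] unfolding A2_def[abs_def] B2_def[abs_def] by simp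
  have "Wd S (\<lambda>z. (1/2) * (complex_of_real (Pu z) - \<i> * complex_of_real (Pv z)))
     (\<lambda>z. (1/2) * (A1 z - \<i> * A2 z)) (\<lambda>z. (1/2) * (B1 z - \<i> * B2 z))"
    by (intro Wd_cmult Wd_diff w1 w2)
  then have w3: "Wd S p (\<lambda>z. (1/2) * (A1 z - \<i> * A2 z)) (\<lambda>z. (1/2) * (B1 z - \<i> * B2 z))"
    by (rule Wd_cong[OF _ S]) (auto simp: p_def)
  define p2 where "p2 z = (1/2) * (B1 z - \<i> * B2 z)" for z
  have im: "Im (p2 z) = 0" if "z \<in> S" for z
    using sw[OF that] by (simp add: p2_def B1_def B2_def)
  have dz0: "dz (\<lambda>w. complex_of_real (P w)) z = p z" if "z \<in> S" for z using Wd_dz(1)[OF w0 that] .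
  have "Wd S (\<lambda>z. cnj (p z)) (\<lambda>z. cnj (p2 z)) (\<lambda>z. cnj ((1/2) * (A1 z - \<i> * A2 z)))"
    using Wd_cnj[OF w3] unfolding p2_def by simp
  then have "Wd S (dzbar (\<lambda>w. complex_of_real (P w))) (\<lambda>z. cnj (p2 z)) (\<lambda>z. cnj ((1/2) * (A1 z - \<i> * A2 z)))"
    by (rule Wd_cong[OF _ S]) (auto simp: Wd_dz(2)[OF w0])
  then have "dz (dzbar (\<lambda>w. complex_of_real (P w))) z = p2 z" if "z \<in> S" for z
    using Wd_dz(1)[OF _ that] im[OF that] by (simp add: complex_eq_iff)
  with that[OF w0 w3[folded p2_def[abs_def]] im dz0] show ?thesis by blast
qed

lemma alg1: "2 * Re (Fw * (of_real h * e) + (aw * (of_real t * (of_real h * e)) + bw * cnj (of_real t * (of_real h * e))) * (z + of_real s * e))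
   = h *\<^sub>R (2 * Re ((aw * (of_real t * e) + bw * cnj (of_real t * e)) * (z + of_real s * e) + Fw * e))"
proof -
  have "Fw * (of_real h * e) + (aw * (of_real t * (of_real h * e)) + bw * cnj (of_real t * (of_real h * e))) * (z + of_real s * e)
     = of_real h * ((aw * (of_real t * e) + bw * cnj (of_real t * e)) * (z + of_real s * e) + Fw * e)"
    by (simp add: algebra_simps)
  then show ?thesis by simp
qed

lemma alg2: "h * (2 * Re (Fw * e)) + t * (2 * Re ((aw * (of_real h * z) + bw * cnj (of_real h * z)) * e))
  = h *\<^sub>R (2 * Re (Fw * e) + t * (2 * Re ((aw * z + bw * cnj z) * e)))"
proof -
  have "(aw * (of_real h * z) + bw * cnj (of_real h * z)) * e = of_real h * ((aw * z + bw * cnj z) * e)"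
    by (simp add: algebra_simps)
  then show ?thesis by (simp add: algebra_simps)
qed

lemma alg3: assumes "Im bw = 0" shows
 "2 * Re (Fw * e) + t * (2 * Re ((aw * z + bw * cnj z) * e)) =
  2 * Re ((aw * (of_real t * e) + bw * cnj (of_real t * e)) * (z + of_real 0 * e) + Fw * e)"
proof -
  have b: "bw = of_real (Re bw)" using assms by (simp add: complex_eq_iff)
  show ?thesis by (subst (1 2) b) (simp add: algebra_simps)
qed

lemma poinc_dir:
  fixes F a b :: "complex \<Rightarrow> complex"
  assumes U: "open U" "convex U" "0 \<in> U" and W: "Wd U F a b" and re: "\<And>z. z \<in> U \<Longrightarrow> Im (b z) = 0"
    and z: "z \<in> U" and e: "cmod e = 1"
  shows "((\<lambda>s. integral {0..1} (\<lambda>t. 2 * Re (F (of_real t * (z + of_real s * e)) * (z + of_real s * e))))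
           has_vector_derivative 2 * Re (F z * e)) (at 0)"
proof -
  have dF: "\<And>w. w \<in> U \<Longrightarrow> (F has_derivative (\<lambda>h. a w * h + b w * cnj h)) (at w)"
    using W unfolding Wd_def by blast
  have cF: "continuous_on U F" using Wd_cont[OF W] .
  have ca: "continuous_on U a" and cb: "continuous_on U b" using W unfolding Wd_def by auto
  obtain r where r: "r > 0" "ball z r \<subseteq> U" using U(1) z open_contains_ball by blast
  define Us where "Us = ball (0::real) r"
  have convU: "of_real t * w \<in> U" if "w \<in> U" "0 \<le> t" "t \<le> 1" for w t
  proof -
    have "(1 - t) *\<^sub>R 0 + t *\<^sub>R w \<in> U"
      by (rule convexD[OF U(2) U(3) that(1)]) (use that in auto)
    then show ?thesis by (simp add: scaleR_conv_of_real)
  qed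
  have inU0: "z + of_real s * e \<in> U" if "s \<in> Us" for s
  proof -
    have "dist z (z + of_real s * e) < r" using that e by (simp add: Us_def dist_norm norm_mult)
    then show ?thesis using r(2) by auto
  qed
  have inU: "of_real t * (z + of_real s * e) \<in> U" if "s \<in> Us" "t \<in> cbox 0 1" for s t
    using convU[OF inU0[OF that(1)]] that(2) by simp
  define f where "f s t = 2 * Re (F (of_real t * (z + of_real s * e)) * (z + of_real s * e))" for s t :: real
  define fx where "fx s t = 2 * Re ((a (of_real t * (z + of_real s * e)) * (of_real t * e)
      + b (of_real t * (z + of_real s * e)) * cnj (of_real t * e)) * (z + of_real s * e)
      + F (of_real t * (z + of_real s * e)) * e)" for s t :: real
  have fxd: "((\<lambda>s. f s t) has_vector_derivative fx s t) (at s within Us)" if st: "s \<in> Us" "t \<in> cbox 0 1" for s t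
  proof -
    define w where "w = of_real t * (z + of_real s * e)"
    have inner: "((\<lambda>s. of_real t * (z + of_real s * e)) has_derivative (\<lambda>h. of_real t * (of_real h * e))) (at s)"
      by (auto intro!: derivative_eq_intros)
    have d1: "((\<lambda>s. F (of_real t * (z + of_real s * e))) has_derivative
        (\<lambda>h. a w * (of_real t * (of_real h * e)) + b w * cnj (of_real t * (of_real h * e)))) (at s)"
      using has_derivative_compose[OF inner dF[OF inU[OF st]]] by (simp add: w_def)
    have d2: "((\<lambda>s. z + of_real s * e) has_derivative (\<lambda>h. of_real h * e)) (at s)"
      by (auto intro!: derivative_eq_intros)
    have d3: "((\<lambda>s. F (of_real t * (z + of_real s * e)) * (z + of_real s * e)) has_derivative
       (\<lambda>h. F w * (of_real h * e) + (a w * (of_real t * (of_real h * e)) + b w * cnj (of_real t * (of_real h * e))) * (z + of_real s * e))) (at s)"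
      using has_derivative_mult[OF d1 d2] by (simp add: w_def)
    have d4: "((\<lambda>s. 2 * Re (F (of_real t * (z + of_real s * e)) * (z + of_real s * e))) has_derivative
       (\<lambda>h. 2 * Re (F w * (of_real h * e) + (a w * (of_real t * (of_real h * e)) + b w * cnj (of_real t * (of_real h * e))) * (z + of_real s * e)))) (at s)"
      using has_derivative_mult[OF has_derivative_const[of 2] bounded_linear.has_derivative[OF bounded_linear_Re d3]]
      by simp
    have "((\<lambda>s. f s t) has_vector_derivative fx s t) (at s)"
      unfolding has_vector_derivative_def f_def
      by (rule has_derivative_eq_rhs[OF d4]) (rule ext, unfold fx_def w_def, rule alg1)
    then show ?thesis by (rule has_vector_derivative_at_within)
  qed
  have integ: "f s integrable_on cbox 0 1" if "s \<in> Us" for s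
  proof -
    have "continuous_on {0..1} (\<lambda>t. F (of_real t * (z + of_real s * e)))"
      by (rule continuous_on_compose2[OF cF]) (auto intro!: continuous_intros inU[OF that])
    then have "continuous_on {0..1} (f s)"
      unfolding f_def by (auto intro!: continuous_intros)
    then show ?thesis by (simp add: integrable_continuous_real)
  qed
  define m where "m p = of_real (snd p) * (z + of_real (fst p) * e)" for p :: "real \<times> real"
  have cm: "continuous_on (Us \<times> cbox 0 1) m" unfolding m_def by (intro continuous_intros)
  have sm: "m ` (Us \<times> cbox 0 1) \<subseteq> U" using inU by (auto simp: m_def)
  have cont: "continuous_on (Us \<times> cbox 0 1) (\<lambda>(s, t). fx s t)"
  proof -
    have "continuous_on (Us \<times> cbox 0 1) (\<lambda>p. 2 * Re ((a (m p) * (of_real (snd p) * e)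
      + b (m p) * cnj (of_real (snd p) * e)) * (z + of_real (fst p) * e) + F (m p) * e))"
      by (intro continuous_intros continuous_on_compose2[OF ca cm sm] continuous_on_compose2[OF cb cm sm]
           continuous_on_compose2[OF cF cm sm])
    moreover have "(\<lambda>(s, t). fx s t) = (\<lambda>p. 2 * Re ((a (m p) * (of_real (snd p) * e)
      + b (m p) * cnj (of_real (snd p) * e)) * (z + of_real (fst p) * e) + F (m p) * e))"
      by (auto simp: fun_eq_iff fx_def m_def)
    ultimately show ?thesis by simp
  qed
  have c: "convex Us" "0 \<in> Us" "open Us" using r by (auto simp: Us_def)
  have "((\<lambda>s. integral (cbox 0 1) (f s)) has_vector_derivative integral (cbox 0 1) (fx 0)) (at 0 within Us)"
    by (rule leibniz_rule_vector_derivative[OF fxd integ cont c(2,1)])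
  then have L: "((\<lambda>s. integral {0..1} (f s)) has_vector_derivative integral {0..1} (fx 0)) (at 0)"
    using at_within_open[OF c(2,3)] by simp
  define G where "G t = t * (2 * Re (F (of_real t * z) * e))" for t :: real
  define G' where "G' t = 2 * Re (F (of_real t * z) * e) + t * (2 * Re ((a (of_real t * z) * z + b (of_real t * z) * cnj z) * e))" for t :: real
  have Gd: "(G has_vector_derivative G' t) (at t within {0..1})" if t: "t \<in> {0..1}" for t
  proof -
    have tz: "of_real t * z \<in> U" using convU[OF z] t by auto
    have inner: "((\<lambda>t. of_real t * z) has_derivative (\<lambda>h. of_real h * z)) (at t)"
      by (auto intro!: derivative_eq_intros)
    have d1: "((\<lambda>t. F (of_real t * z)) has_derivative
        (\<lambda>h. a (of_real t * z) * (of_real h * z) + b (of_real t * z) * cnj (of_real h * z))) (at t)"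
      using has_derivative_compose[OF inner dF[OF tz]] by simp
    have d2: "((\<lambda>t. 2 * Re (F (of_real t * z) * e)) has_derivative
        (\<lambda>h. 2 * Re ((a (of_real t * z) * (of_real h * z) + b (of_real t * z) * cnj (of_real h * z)) * e))) (at t)"
      using has_derivative_mult[OF has_derivative_const[of 2] bounded_linear.has_derivative[OF bounded_linear_Re
          has_derivative_mult[OF d1 has_derivative_const[of e]]]]
      by simp
    have "(G has_derivative (\<lambda>h. h * (2 * Re (F (of_real t * z) * e)) + t * (2 * Re ((a (of_real t * z) * (of_real h * z) + b (of_real t * z) * cnj (of_real h * z)) * e)))) (at t)"
      unfolding G_def using has_derivative_mult[OF has_derivative_ident d2] by (simp add: algebra_simps)
    then have "(G has_vector_derivative G' t) (at t)"
      unfolding has_vector_derivative_def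
      by (rule has_derivative_eq_rhs) (rule ext, unfold G'_def, rule alg2)
    then show ?thesis by (rule has_vector_derivative_at_within)
  qed
  have "(G' has_integral (G 1 - G 0)) {0..1}"
    by (rule fundamental_theorem_of_calculus) (use Gd in auto)
  moreover have "G' t = fx 0 t" if "t \<in> {0..1}" for t
  proof -
    have tz: "of_real t * z \<in> U" using convU[OF z] that by auto
    have "Im (b (of_real t * z)) = 0" using re[OF tz] .
    from alg3[OF this, of "F (of_real t * z)" e t "a (of_real t * z)" z]
    show ?thesis unfolding G'_def fx_def by simp
  qed
  ultimately have "(fx 0 has_integral (G 1 - G 0)) {0..1}"
    using has_integral_eq by metis
  then have "integral {0..1} (fx 0) = 2 * Re (F z * e)"
    by (simp add: integral_unique G_def)
  with L show ?thesis unfolding f_def by simp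
qed

lemma poinc_convex:
  fixes F a b :: "complex \<Rightarrow> complex"
  assumes U: "open U" "convex U" "0 \<in> U" and W: "Wd U F a b" and re: "\<And>z. z \<in> U \<Longrightarrow> Im (b z) = 0"
  shows "\<exists>R::complex \<Rightarrow> real. genD U R (\<lambda>z. 2 * Re (F z)) (\<lambda>z. - 2 * Im (F z))"
proof -
  define R where "R z = integral {0..1} (\<lambda>t. 2 * Re (F (of_real t * z) * z))" for z
  have du: "((\<lambda>s. R (z + of_real s)) has_vector_derivative 2 * Re (F z)) (at 0)" if z: "z \<in> U" for z
    using poinc_dir[OF U W re z, of 1] by (simp add: R_def)
  have dv: "((\<lambda>s. R (z + \<i> * of_real s)) has_vector_derivative - 2 * Im (F z)) (at 0)" if z: "z \<in> U" for z
    using poinc_dir[OF U W re z, of \<i>] by (simp add: R_def mult.commute)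
  have pu: "partial_u R z = 2 * Re (F z)" if "z \<in> U" for z
    unfolding partial_u_def using vector_derivative_at[OF du[OF that]] .
  have pv: "partial_v R z = - 2 * Im (F z)" if "z \<in> U" for z
    unfolding partial_v_def using vector_derivative_at[OF dv[OF that]] .
  have cF: "continuous_on U F" using Wd_cont[OF W] .
  have c1: "continuous_on U (\<lambda>z. 2 * Re (F z))" "continuous_on U (\<lambda>z. - 2 * Im (F z))"
    using cF by (auto intro!: continuous_intros)
  have "C1_on U R" unfolding C1_on_def
  proof (intro conjI ballI)
    fix z assume "z \<in> U"
    show "(\<lambda>t. R (z + complex_of_real t)) differentiable at 0"
      using du[OF \<open>z \<in> U\<close>] unfolding has_vector_derivative_def differentiable_def by blast
    show "(\<lambda>t. R (z + \<i> * complex_of_real t)) differentiable at 0"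
      using dv[OF \<open>z \<in> U\<close>] unfolding has_vector_derivative_def differentiable_def by blast
  next
    show "continuous_on U (partial_u R)"
      using c1(1) by (rule continuous_on_cong[THEN iffD1, rotated 2]) (auto simp: pu)
    show "continuous_on U (partial_v R)"
      using c1(2) by (rule continuous_on_cong[THEN iffD1, rotated 2]) (auto simp: pv)
  qed
  then have "genD U R (\<lambda>z. 2 * Re (F z)) (\<lambda>z. - 2 * Im (F z))"
    by (rule genD_cong[OF C1_genD[OF U(1)] U(1)]) (auto simp: pu pv)
  then show ?thesis by blast
qed

lemma re_ident: "Re h *\<^sub>R (2 * Re X) + Im h *\<^sub>R (- 2 * Im X) = 2 * Re (X * h)"
  by (simp add: algebra_simps)

lemma poinc_sc:
  fixes F a b :: "complex \<Rightarrow> complex"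
  assumes S: "open S" "simply_connected S" and W: "Wd S F a b" and re: "\<And>z. z \<in> S \<Longrightarrow> Im (b z) = 0"
  shows "\<exists>R::complex \<Rightarrow> real. genD S R (\<lambda>z. 2 * Re (F z)) (\<lambda>z. - 2 * Im (F z))"
proof -
  from Riemann_mapping_theorem[of S] S
  consider "S = {}" | "S = UNIV" | phi psi where "phi holomorphic_on S" "psi holomorphic_on ball 0 1"
      "\<forall>z\<in>S. phi z \<in> ball 0 1 \<and> psi (phi z) = z" "\<forall>z\<in>ball 0 1. psi z \<in> S \<and> phi (psi z) = z"
    by blast
  then show ?thesis
  proof cases
    case 1 then show ?thesis by (auto simp: genD_def)
  next
    case 2 then show ?thesis using poinc_convex[of UNIV F a b] W re by auto
  next
    case 3
    define B where "B = ball (0::complex) 1"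
    have B: "open B" "convex B" "0 \<in> B" by (auto simp: B_def)
    have hpsi: "psi holomorphic_on B" using 3 by (simp add: B_def)
    have hpsi': "deriv psi holomorphic_on B" using hpsi B holomorphic_deriv by blast
    have dpsi: "(psi has_field_derivative deriv psi w) (at w)" if "w \<in> B" for w
      using hpsi B that holomorphic_derivI by blast
    have cpsi': "continuous_on B (deriv psi)" using hpsi' holomorphic_on_imp_continuous_on by blast
    have img: "psi ` B \<subseteq> S" using 3 by (auto simp: B_def)
    have w1: "Wd B (\<lambda>w. F (psi w)) (\<lambda>w. a (psi w) * deriv psi w) (\<lambda>w. b (psi w) * cnj (deriv psi w))"
      by (rule Wd_compose[OF W dpsi cpsi' img])
    have w2: "Wd B (deriv psi) (deriv (deriv psi)) (\<lambda>z. 0)" by (rule Wd_holo[OF hpsi' B(1)])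
    define Ft where "Ft w = F (psi w) * deriv psi w" for w
    have w3: "Wd B Ft (\<lambda>w. a (psi w) * deriv psi w * deriv psi w + F (psi w) * deriv (deriv psi) w)
        (\<lambda>w. b (psi w) * cnj (deriv psi w) * deriv psi w + F (psi w) * 0)"
      unfolding Ft_def[abs_def] by (rule Wd_mult[OF w1 w2])
    have re3: "Im (b (psi w) * cnj (deriv psi w) * deriv psi w + F (psi w) * 0) = 0" if "w \<in> B" for w
    proof -
      have "Im (b (psi w)) = 0" using re img that by auto
      then show ?thesis by (simp add: algebra_simps)
    qed
    obtain Rt :: "complex \<Rightarrow> real" where Rt: "genD B Rt (\<lambda>z. 2 * Re (Ft z)) (\<lambda>z. - 2 * Im (Ft z))"
      using poinc_convex[OF B w3 re3] by blast
    define R where "R z = Rt (phi z)" for z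
    have "genD S R (\<lambda>z. 2 * Re (F z)) (\<lambda>z. - 2 * Im (F z))"
      unfolding genD_def
    proof (intro conjI ballI)
      fix z assume z: "z \<in> S"
      have pz: "phi z \<in> B" "psi (phi z) = z" using 3 z by (auto simp: B_def)
      have dphi: "(phi has_field_derivative deriv phi z) (at z)"
        using 3 S z holomorphic_derivI by blast
      have "((\<lambda>z. psi (phi z)) has_field_derivative deriv psi (phi z) * deriv phi z) (at z)"
        using DERIV_chain2[OF dpsi[OF pz(1)] dphi] .
      then have "((\<lambda>z. z) has_field_derivative deriv psi (phi z) * deriv phi z) (at z)"
        by (rule has_field_derivative_transform_within_open[OF _ S(1) z]) (use 3 in auto)
      then have one: "deriv psi (phi z) * deriv phi z = 1"
        using DERIV_ident DERIV_unique by blast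
      have dRt: "(Rt has_derivative (\<lambda>h. Re h *\<^sub>R (2 * Re (Ft (phi z))) + Im h *\<^sub>R (- 2 * Im (Ft (phi z))))) (at (phi z))"
        using Rt pz(1) unfolding genD_def by blast
      from has_derivative_compose[OF dphi[unfolded has_field_derivative_def] dRt]
      have "(R has_derivative (\<lambda>h. 2 * Re (Ft (phi z) * (deriv phi z * h)))) (at z)"
        unfolding R_def re_ident .
      moreover have "Ft (phi z) * (deriv phi z * h) = F z * h" for h
        using one pz(2) by (simp add: Ft_def algebra_simps)
      ultimately show "(R has_derivative (\<lambda>h. Re h *\<^sub>R (2 * Re (F z)) + Im h *\<^sub>R (- 2 * Im (F z)))) (at z)"
        unfolding re_ident by simp
    next
      have cF: "continuous_on S F" using Wd_cont[OF W] .
      show "continuous_on S (\<lambda>z. 2 * Re (F z))" "continuous_on S (\<lambda>z. - 2 * Im (F z))"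
        using cF by (auto intro!: continuous_intros)
    qed
    then show ?thesis by blast
  qed
qed

lemma algA:
  fixes g q2 p2 :: complex and lam :: real
  assumes "g \<noteq> 0" "p2 = complex_of_real ((cmod g)^2) * q2"
  shows "(1 / g + \<i> * complex_of_real lam) * (g * q2 - \<i> * complex_of_real lam * p2)
     = complex_of_real ((cmod (1 + \<i> * complex_of_real lam * g))^2) * q2"
  unfolding assms(2) complex_norm_square using assms(1)
  by (simp add: field_simps)

lemma algB:
  fixes g q2 :: complex and lam :: real
  assumes "1 + \<i> * complex_of_real lam * g \<noteq> 0"
  shows "complex_of_real ((cmod (g / (1 + \<i> * complex_of_real lam * g)))^2) *
     (complex_of_real ((cmod (1 + \<i> * complex_of_real lam * g))^2) * q2) = complex_of_real ((cmod g)^2) * q2"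
  using assms by (simp add: norm_divide power_divide)

lemma algC:
  fixes g p q :: complex and lam :: real
  assumes "g \<noteq> 0" "1 + \<i> * complex_of_real lam * g \<noteq> 0"
    "p - complex_of_real ((cmod g)^2) * q \<noteq> 0"
  shows "p - complex_of_real ((cmod (g / (1 + \<i> * complex_of_real lam * g)))^2) *
    ((1 / g + \<i> * complex_of_real lam) * (g * q - \<i> * complex_of_real lam * p)) \<noteq> 0"
proof -
  define w where "w = 1 + \<i> * complex_of_real lam * g"
  have w0: "w \<noteq> 0" using assms(2) by (simp add: w_def)
  have w: "w \<noteq> 0" "cnj w \<noteq> 0" using w0 by auto
  have cw: "cnj w = 1 - \<i> * complex_of_real lam * cnj g" by (simp add: w_def)
  have "p - complex_of_real ((cmod (g / w))^2) * ((1 / g + \<i> * complex_of_real lam) * (g * q - \<i> * complex_of_real lam * p))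
      = (p - complex_of_real ((cmod g)^2) * q) / cnj w"
  proof -
    have e1: "complex_of_real ((cmod (g / w))^2) = g * cnj g / (w * cnj w)"
      by (simp add: norm_divide power_divide complex_norm_square[symmetric])
    have e2: "1 / g + \<i> * complex_of_real lam = w / g" using assms(1) by (simp add: w_def field_simps)
    show ?thesis unfolding e1 e2 complex_norm_square using w assms(1)
      by (simp add: field_simps cw)
  qed
  then show ?thesis using assms(3) w unfolding w_def by simp
qed

lemma Wd_eqb:
  assumes "Wd S f a b" "open S" "\<And>z. z \<in> S \<Longrightarrow> b' z = b z"
  shows "Wd S f a b'"
  using Wd_eq[OF assms(1,2) _ assms(3)] by simp

theorem mainTheorem3:
  fixes \<Omega> :: "complex set" and g :: "complex \<Rightarrow> complex"
    and P Q :: "complex \<Rightarrow> real" and lam :: real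
  assumes "open \<Omega>" and "connected \<Omega>" and "simply_connected \<Omega>"
    and "weierstrass_first_kind \<Omega> g P Q"
    and "\<forall>z\<in>\<Omega>. 1 + \<i> * complex_of_real lam * g z \<noteq> 0"
  shows "(\<exists>Ql :: complex \<Rightarrow> real. C2_on \<Omega> Ql \<and>
            (\<forall>z\<in>\<Omega>. dz (\<lambda>w. complex_of_real (Ql w)) z
               = (1 / g z + \<i> * complex_of_real lam) *
                 (g z * dz (\<lambda>w. complex_of_real (Q w)) z
                  - \<i> * complex_of_real lam * dz (\<lambda>w. complex_of_real (P w)) z)))
       \<and> (\<forall>Ql :: complex \<Rightarrow> real. C2_on \<Omega> Ql \<and>
            (\<forall>z\<in>\<Omega>. dz (\<lambda>w. complex_of_real (Ql w)) z
               = (1 / g z + \<i> * complex_of_real lam) *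
                 (g z * dz (\<lambda>w. complex_of_real (Q w)) z
                  - \<i> * complex_of_real lam * dz (\<lambda>w. complex_of_real (P w)) z))
            \<longrightarrow> weierstrass_first_kind \<Omega> (\<lambda>z. g z / (1 + \<i> * complex_of_real lam * g z)) P Ql)"
proof -
  note S = assms(1)
  have C2g: "C2_on \<Omega> g" and C2P: "C2_on \<Omega> P" and C2Q: "C2_on \<Omega> Q"
    and g0: "\<And>z. z \<in> \<Omega> \<Longrightarrow> g z \<noteq> 0" and gh: "\<And>z. z \<in> \<Omega> \<Longrightarrow> dzbar g z = 0"
    and h2: "\<And>z. z \<in> \<Omega> \<Longrightarrow> dz (dzbar (\<lambda>w. complex_of_real (P w))) z
          = complex_of_real ((cmod (g z))\<^sup>2) * dz (dzbar (\<lambda>w. complex_of_real (Q w))) z"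
    and h3: "\<And>z. z \<in> \<Omega> \<Longrightarrow> dz (\<lambda>w. complex_of_real (P w)) z
          - complex_of_real ((cmod (g z))\<^sup>2) * dz (\<lambda>w. complex_of_real (Q w)) z \<noteq> 0"
    using assms(4) unfolding weierstrass_first_kind_def by auto
  have den: "\<And>z. z \<in> \<Omega> \<Longrightarrow> 1 + \<i> * complex_of_real lam * g z \<noteq> 0" using assms(5) by auto
  have gC1: "C1_on \<Omega> g" using C2g unfolding C2_on_def by auto
  have wg: "Wd \<Omega> g (dz g) (\<lambda>z. 0)"
    by (rule Wd_eqb[OF C1_Wd[OF S gC1] S]) (simp add: gh)
  have gholo: "g holomorphic_on \<Omega>" by (rule Wd_holoI(1)[OF wg])
  obtain p p1 p2 where wp: "Wd \<Omega> (\<lambda>w. complex_of_real (P w)) p (\<lambda>z. cnj (p z))" and wp1: "Wd \<Omega> p p1 p2"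
    and p2r: "\<And>z. z \<in> \<Omega> \<Longrightarrow> Im (p2 z) = 0"
    and dzP: "\<And>z. z \<in> \<Omega> \<Longrightarrow> dz (\<lambda>w. complex_of_real (P w)) z = p z"
    and dzzP: "\<And>z. z \<in> \<Omega> \<Longrightarrow> dz (dzbar (\<lambda>w. complex_of_real (P w))) z = p2 z"
    by (rule real_C2_facts[OF S C2P]) blast
  obtain q q1 q2 where wq: "Wd \<Omega> (\<lambda>w. complex_of_real (Q w)) q (\<lambda>z. cnj (q z))" and wq1: "Wd \<Omega> q q1 q2"
    and q2r: "\<And>z. z \<in> \<Omega> \<Longrightarrow> Im (q2 z) = 0"
    and dzQ: "\<And>z. z \<in> \<Omega> \<Longrightarrow> dz (\<lambda>w. complex_of_real (Q w)) z = q z"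
    and dzzQ: "\<And>z. z \<in> \<Omega> \<Longrightarrow> dz (dzbar (\<lambda>w. complex_of_real (Q w))) z = q2 z"
    by (rule real_C2_facts[OF S C2Q]) blast
  have h2': "p2 z = complex_of_real ((cmod (g z))\<^sup>2) * q2 z" if "z \<in> \<Omega>" for z
    using h2[OF that] dzzP[OF that] dzzQ[OF that] by simp
  have h3': "p z - complex_of_real ((cmod (g z))\<^sup>2) * q z \<noteq> 0" if "z \<in> \<Omega>" for z
    using h3[OF that] dzP[OF that] dzQ[OF that] by simp
  define F where "F z = (1 / g z + \<i> * complex_of_real lam) * (g z * q z - \<i> * complex_of_real lam * p z)" for z
  have Feq: "(1 / g z + \<i> * complex_of_real lam) *
                 (g z * dz (\<lambda>w. complex_of_real (Q w)) z
                  - \<i> * complex_of_real lam * dz (\<lambda>w. complex_of_real (P w)) z) = F z" if "z \<in> \<Omega>" for z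
    using dzP[OF that] dzQ[OF that] by (simp add: F_def)
  have winv0: "Wd \<Omega> (\<lambda>z. inverse (g z)) (\<lambda>z. - dz g z / (g z)^2) (\<lambda>z. - 0 / (g z)^2)"
    by (rule Wd_inverse[OF wg g0])
  have winv: "Wd \<Omega> (\<lambda>z. 1 / g z) (\<lambda>z. - dz g z / (g z)^2) (\<lambda>z. - 0 / (g z)^2)"
    by (rule Wd_cong[OF winv0 S]) (simp_all add: inverse_eq_divide)
  define bF where "bF z = (1 / g z + \<i> * complex_of_real lam) * (g z * q2 z - \<i> * complex_of_real lam * p2 z)" for z
  note W0 = Wd_mult[OF Wd_add[OF winv Wd_const[of _ "\<i> * complex_of_real lam"]]
      Wd_diff[OF Wd_mult[OF wg wq1] Wd_cmult[OF wp1, of "\<i> * complex_of_real lam"]]]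
  define aF where "aF z = (- dz g z / (g z)^2 + 0) * (g z * q z - \<i> * complex_of_real lam * p z)
     + (1 / g z + \<i> * complex_of_real lam) * ((dz g z * q z + g z * q1 z) - \<i> * complex_of_real lam * p1 z)" for z
  have wF: "Wd \<Omega> F aF bF" unfolding F_def[abs_def]
    by (rule Wd_eq[OF W0 S]) (simp_all add: aF_def bF_def)
  have bFval: "bF z = complex_of_real ((cmod (1 + \<i> * complex_of_real lam * g z))^2) * q2 z" if "z \<in> \<Omega>" for z
    unfolding bF_def by (rule algA[OF g0[OF that] h2'[OF that]])
  have bFre: "Im (bF z) = 0" if "z \<in> \<Omega>" for z
    using bFval[OF that] q2r[OF that] by simp
  obtain R :: "complex \<Rightarrow> real" where R: "genD \<Omega> R (\<lambda>z. 2 * Re (F z)) (\<lambda>z. - 2 * Im (F z))"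
    using poinc_sc[OF S assms(3) wF bFre] by blast
  have wR: "Wd \<Omega> (\<lambda>w. complex_of_real (R w)) F (\<lambda>z. cnj (F z))"
    by (rule Wd_eq[OF genD_Wd[OF genD_linear[OF R bounded_linear_of_real]] S]) (simp_all add: complex_eq_iff)
  have C2R: "C2_on \<Omega> R" by (rule real_C2_from[OF S wR wF Wd_cnj[OF wF]])
  have part1: "\<exists>Ql :: complex \<Rightarrow> real. C2_on \<Omega> Ql \<and>
            (\<forall>z\<in>\<Omega>. dz (\<lambda>w. complex_of_real (Ql w)) z
               = (1 / g z + \<i> * complex_of_real lam) *
                 (g z * dz (\<lambda>w. complex_of_real (Q w)) z
                  - \<i> * complex_of_real lam * dz (\<lambda>w. complex_of_real (P w)) z))"
  proof (intro exI[of _ R] conjI ballI)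
    show "C2_on \<Omega> R" by (rule C2R)
    fix z assume z: "z \<in> \<Omega>"
    show "dz (\<lambda>w. complex_of_real (R w)) z
               = (1 / g z + \<i> * complex_of_real lam) *
                 (g z * dz (\<lambda>w. complex_of_real (Q w)) z
                  - \<i> * complex_of_real lam * dz (\<lambda>w. complex_of_real (P w)) z)"
      unfolding Wd_dz(1)[OF wR z] Feq[OF z] ..
  qed
  have part2: "weierstrass_first_kind \<Omega> (\<lambda>z. g z / (1 + \<i> * complex_of_real lam * g z)) P Ql"
    if C2l: "C2_on \<Omega> Ql" and dzl: "\<forall>z\<in>\<Omega>. dz (\<lambda>w. complex_of_real (Ql w)) z
               = (1 / g z + \<i> * complex_of_real lam) *
                 (g z * dz (\<lambda>w. complex_of_real (Q w)) z
                  - \<i> * complex_of_real lam * dz (\<lambda>w. complex_of_real (P w)) z)" for Ql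
  proof -
    obtain l l1 l2 where wl: "Wd \<Omega> (\<lambda>w. complex_of_real (Ql w)) l (\<lambda>z. cnj (l z))" and wl1: "Wd \<Omega> l l1 l2"
      and l2r: "\<And>z. z \<in> \<Omega> \<Longrightarrow> Im (l2 z) = 0"
      and dzL: "\<And>z. z \<in> \<Omega> \<Longrightarrow> dz (\<lambda>w. complex_of_real (Ql w)) z = l z"
      and dzzL: "\<And>z. z \<in> \<Omega> \<Longrightarrow> dz (dzbar (\<lambda>w. complex_of_real (Ql w))) z = l2 z"
      by (rule real_C2_facts[OF S C2l]) blast
    have lF: "l z = F z" if "z \<in> \<Omega>" for z
      using dzL[OF that] dzl Feq[OF that] that by auto
    have wl': "Wd \<Omega> l aF bF" by (rule Wd_cong[OF wF S]) (simp_all add: lF)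
    have l2b: "l2 z = bF z" if "z \<in> \<Omega>" for z
      using Wd_dz(2)[OF wl' that] Wd_dz(2)[OF wl1 that] by simp
    define gl where "gl z = g z / (1 + \<i> * complex_of_real lam * g z)" for z
    have glholo: "gl holomorphic_on \<Omega>" unfolding gl_def
      using gholo den by (auto intro!: holomorphic_intros)
    have C2gl: "C2_on \<Omega> gl" by (rule holo_C2[OF S glholo])
    have wgl: "Wd \<Omega> gl (deriv gl) (\<lambda>z. 0)" by (rule Wd_holo[OF glholo S])
    have "\<forall>z\<in>\<Omega>. gl z \<noteq> 0 \<and> dzbar gl z = 0 \<and>
        dz (dzbar (\<lambda>w. complex_of_real (P w))) z
          = complex_of_real ((cmod (gl z))\<^sup>2) * dz (dzbar (\<lambda>w. complex_of_real (Ql w))) z \<and>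
        dz (\<lambda>w. complex_of_real (P w)) z
          - complex_of_real ((cmod (gl z))\<^sup>2) * dz (\<lambda>w. complex_of_real (Ql w)) z \<noteq> 0"
    proof
      fix z assume z: "z \<in> \<Omega>"
      have "gl z \<noteq> 0" using g0[OF z] den[OF z] by (simp add: gl_def)
      moreover have "dzbar gl z = 0" using Wd_dz(2)[OF wgl z] .
      moreover have "dz (dzbar (\<lambda>w. complex_of_real (P w))) z
          = complex_of_real ((cmod (gl z))\<^sup>2) * dz (dzbar (\<lambda>w. complex_of_real (Ql w))) z"
        unfolding dzzP[OF z] dzzL[OF z] l2b[OF z] bFval[OF z] h2'[OF z] gl_def
        by (rule sym[OF algB[OF den[OF z], of "q2 z"]])
      moreover have "dz (\<lambda>w. complex_of_real (P w)) z
          - complex_of_real ((cmod (gl z))\<^sup>2) * dz (\<lambda>w. complex_of_real (Ql w)) z \<noteq> 0"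
        unfolding dzP[OF z] dzL[OF z] lF[OF z] gl_def F_def
        by (rule algC[OF g0[OF z] den[OF z] h3'[OF z]])
      ultimately show "gl z \<noteq> 0 \<and> dzbar gl z = 0 \<and>
        dz (dzbar (\<lambda>w. complex_of_real (P w))) z
          = complex_of_real ((cmod (gl z))\<^sup>2) * dz (dzbar (\<lambda>w. complex_of_real (Ql w))) z \<and>
        dz (\<lambda>w. complex_of_real (P w)) z
          - complex_of_real ((cmod (gl z))\<^sup>2) * dz (\<lambda>w. complex_of_real (Ql w)) z \<noteq> 0" by blast
    qed
    then show ?thesis unfolding weierstrass_first_kind_def gl_def[abs_def]
      using C2gl C2P C2l unfolding gl_def[abs_def] by blast
  qed
  show ?thesis using part1 part2 by blast
qed

end
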